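(* Let $P$ be a finite poset, $I\in\mathcal{IC}(P)$ and $x\in\nabla(I)-I$. Then $x\in\mathrm{Row}(I)$ if and only if $x\in\lceil I\rceil$.
   Context: All posets are finite. For a poset $P$, a subset $I\subseteq P$ is interval-closed if for all $x,y\in I$ and $z\in P$ with $x\le z\le y$ we have $z\in I$; $\mathcal{IC}(P)$ is the set of interval-closed subsets of $P$. For $x\in P$ the toggle $t_x:\mathcal{IC}(P)\to\mathcal{IC}(P)$ is defined by $t_x(I)=I\triangle\{x\}$ if $I\triangle\{x\}\in\mathcal{IC}(P)$ and $t_x(I)=I$ otherwise. Rowmotion is $\mathrm{Row}=t_{x_1}\circ t_{x_2}\circ\cdots\circ t_{x_N}:\mathcal{IC}(P)\to\mathcal{IC}(P)$, where $(x_1,\dots,x_N)$ is a linear extension of $P$ (so elements are toggled from the top of the poset down); this does not depend on the choice of linear extension. $\nabla(I)$ is the smallest order filter containing $I$, and the ceiling $\lceil I\rceil$ is the set of minimal elements of $\nabla(I)-I$. *)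

theory Defs
  imports Main
begin

text \<open>A finite poset is modelled as a finite carrier set P of a type of class order,
  carrying the induced partial order.\<close>

definition interval_closed :: "'a::order set \<Rightarrow> 'a set \<Rightarrow> bool" where
  "interval_closed P I \<longleftrightarrow> I \<subseteq> P \<and>
     (\<forall>x\<in>I. \<forall>y\<in>I. \<forall>z\<in>P. x \<le> z \<and> z \<le> y \<longrightarrow> z \<in> I)"

definition IC :: "'a::order set \<Rightarrow> 'a set set" where
  "IC P = {I. interval_closed P I}"

definition toggle :: "'a::order set \<Rightarrow> 'a \<Rightarrow> 'a set \<Rightarrow> 'a set" where
  "toggle P x I = (if ((I - {x}) \<union> ({x} - I)) \<in> IC P then ((I - {x}) \<union> ({x} - I)) else I)"

definition linear_extension :: "'a::order set \<Rightarrow> 'a list \<Rightarrow> bool" where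
  "linear_extension P xs \<longleftrightarrow> distinct xs \<and> set xs = P \<and>
     (\<forall>i<length xs. \<forall>j<length xs. xs ! i < xs ! j \<longrightarrow> i < j)"

definition rowmotion_wrt :: "'a::order set \<Rightarrow> 'a list \<Rightarrow> 'a set \<Rightarrow> 'a set" where
  "rowmotion_wrt P xs I = foldr (toggle P) xs I"

definition up_closure :: "'a::order set \<Rightarrow> 'a set \<Rightarrow> 'a set" where
  "up_closure P I = {y\<in>P. \<exists>x\<in>I. x \<le> y}"

definition ceiling_set :: "'a::order set \<Rightarrow> 'a set \<Rightarrow> 'a set" where
  "ceiling_set P I = {y \<in> up_closure P I - I. \<forall>z\<in>up_closure P I - I. \<not> z < y}"

end

theory Submission
  imports Defs
begin

lemma foldr_notin: "w \<notin> set l \<Longrightarrow> (w \<in> foldr (toggle P) l S) = (w \<in> S)"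
  by (induction l) (auto simp: toggle_def)

lemma foldr_IC: "S \<in> IC P \<Longrightarrow> foldr (toggle P) l S \<in> IC P"
  by (induction l) (auto simp: toggle_def)

lemma after_not_less:
  assumes "linear_extension P (ys @ x # zs)" "w \<in> set zs"
  shows "\<not> w < x"
proof
  assume wx: "w < x"
  from assms(2) obtain k where k: "k < length zs" "zs ! k = w" by (auto simp: in_set_conv_nth)
  let ?xs = "ys @ x # zs"
  have "?xs ! (length ys + Suc k) = w" using k by (simp add: nth_append)
  moreover have "?xs ! length ys = x" by simp
  moreover have "length ys + Suc k < length ?xs" "length ys < length ?xs" using k by auto
  moreover have H: "\<And>i j. i < length ?xs \<Longrightarrow> j < length ?xs \<Longrightarrow> ?xs ! i < ?xs ! j \<Longrightarrow> i < j"
    using assms(1) unfolding linear_extension_def by blast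
  ultimately have "length ys + Suc k < length ys" using wx by metis
  then show False by simp
qed

lemma before_not_greater:
  assumes "linear_extension P (ys @ x # zs)" "w \<in> set ys"
  shows "\<not> x < w"
proof
  assume wx: "x < w"
  from assms(2) obtain k where k: "k < length ys" "ys ! k = w" by (auto simp: in_set_conv_nth)
  let ?xs = "ys @ x # zs"
  have "?xs ! k = w" using k by (simp add: nth_append)
  moreover have "?xs ! length ys = x" by simp
  moreover have "k < length ?xs" "length ys < length ?xs" using k by auto
  moreover have H: "\<And>i j. i < length ?xs \<Longrightarrow> j < length ?xs \<Longrightarrow> ?xs ! i < ?xs ! j \<Longrightarrow> i < j"
    using assms(1) unfolding linear_extension_def by blast
  ultimately have "length ys < k" using wx by metis
  then show False using k(1) by simp
qed

lemma IC_sub: "S \<in> IC P \<Longrightarrow> S \<subseteq> P"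
  unfolding IC_def interval_closed_def by blast

lemma IC_ball: "S \<in> IC P \<Longrightarrow> \<forall>p\<in>S. \<forall>q\<in>S. \<forall>z\<in>P. p \<le> z \<and> z \<le> q \<longrightarrow> z \<in> S"
  unfolding IC_def interval_closed_def by blast

lemma IC_mem: "S \<in> IC P \<Longrightarrow> p \<in> S \<Longrightarrow> q \<in> S \<Longrightarrow> z \<in> P \<Longrightarrow> p \<le> z \<Longrightarrow> z \<le> q \<Longrightarrow> z \<in> S"
  unfolding IC_def interval_closed_def by blast

theorem lemma2:
  fixes P :: "'a::order set" and I :: "'a set" and xs :: "'a list" and x :: 'a
  assumes "finite P"
    and "I \<in> IC P"
    and "linear_extension P xs"
    and "x \<in> up_closure P I - I"
  shows "x \<in> rowmotion_wrt P xs I \<longleftrightarrow> x \<in> ceiling_set P I"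
proof -
  have IP: "I \<subseteq> P" using assms(2) by (rule IC_sub)
  have xP: "x \<in> P" and xI: "x \<notin> I" using assms(4) by (auto simp: up_closure_def)
  obtain a where aI: "a \<in> I" and ax: "a \<le> x" using assms(4) by (auto simp: up_closure_def)
  have ax': "a < x" using ax aI xI by (metis order.not_eq_order_implies_strict)
  have dist: "distinct xs" and setxs: "set xs = P" using assms(3) by (auto simp: linear_extension_def)
  obtain ys zs where xs: "xs = ys @ x # zs" using xP setxs by (metis split_list)
  have le: "linear_extension P (ys @ x # zs)" using assms(3) xs by simp
  have x_ys: "x \<notin> set ys" and x_zs: "x \<notin> set zs" using dist xs by auto
  define J where "J = foldr (toggle P) zs I"
  have JIC: "J \<in> IC P" unfolding J_def using assms(2) by (rule foldr_IC)
  have below: "\<And>w. w < x \<Longrightarrow> (w \<in> J) = (w \<in> I)"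
  proof -
    fix w assume "w < x"
    then have "w \<notin> set zs" using after_not_less[OF le] by blast
    then show "(w \<in> J) = (w \<in> I)" by (simp add: J_def foldr_notin)
  qed
  have xJ: "x \<notin> J" unfolding J_def using foldr_notin[OF x_zs] xI by simp
  have above: "\<And>y. y \<in> P \<Longrightarrow> x < y \<Longrightarrow> y \<notin> J"
  proof -
    fix y assume yP: "y \<in> P" and xy: "x < y"
    have "y \<notin> set ys" using before_not_greater[OF le] xy by blast
    moreover have "y \<noteq> x" using xy by simp
    moreover have "y \<in> set (ys @ x # zs)" using yP setxs xs by simp
    ultimately have "y \<in> set zs" by simp
    then obtain us vs where zs: "zs = us @ y # vs" by (metis split_list)
    have le2: "linear_extension P ((ys @ x # us) @ y # vs)" using le zs by simp
    have y_us: "y \<notin> set us" and y_vs: "y \<notin> set vs" using dist xs zs by auto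
    define K where "K = foldr (toggle P) vs I"
    have belowK: "\<And>w. w < y \<Longrightarrow> (w \<in> K) = (w \<in> I)"
    proof -
      fix w assume "w < y"
      then have "w \<notin> set vs" using after_not_less[OF le2] by blast
      then show "(w \<in> K) = (w \<in> I)" by (simp add: K_def foldr_notin)
    qed
    have yI: "y \<notin> I"
    proof
      assume yI: "y \<in> I"
      have H: "\<forall>p\<in>I. \<forall>q\<in>I. \<forall>z\<in>P. p \<le> z \<and> z \<le> q \<longrightarrow> z \<in> I"
        using assms(2) by (rule IC_ball)
      have "x \<in> I" using bspec[OF bspec[OF bspec[OF H aI] yI] xP] less_imp_le[OF ax'] less_imp_le[OF xy] by simp
      then show False using xI by simp
    qed
    have yK: "y \<notin> K" unfolding K_def using foldr_notin[OF y_vs] yI by simp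
    have ay: "a < y" using ax' xy by (rule less_trans)
    have aK: "a \<in> K" using belowK[OF ay] aI by simp
    have xK: "x \<notin> K" using belowK[OF xy] xI by simp
    have "K \<union> {y} \<notin> IC P"
    proof
      assume Kic: "K \<union> {y} \<in> IC P"
      have "a \<in> K \<union> {y}" "y \<in> K \<union> {y}" using aK by auto
      then have "x \<in> K \<union> {y}" using IC_mem[OF Kic _ _ xP less_imp_le[OF ax'] less_imp_le[OF xy]] by blast
      then show False using xK xy by simp
    qed
    moreover have "(K - {y}) \<union> ({y} - K) = K \<union> {y}" using yK by auto
    ultimately have "toggle P y K = K" by (simp add: toggle_def)
    then have "y \<notin> foldr (toggle P) (y # vs) I" using yK by (simp add: K_def)
    then show "y \<notin> J" unfolding J_def zs using foldr_notin[OF y_us] by simp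
  qed
  have row: "rowmotion_wrt P xs I = foldr (toggle P) ys (toggle P x J)"
    by (simp add: rowmotion_wrt_def xs J_def)
  have rowx: "(x \<in> rowmotion_wrt P xs I) = (x \<in> toggle P x J)"
    using row foldr_notin[OF x_ys] by simp
  have sym: "(J - {x}) \<union> ({x} - J) = J \<union> {x}" using xJ by auto
  have tog: "(x \<in> toggle P x J) = (J \<union> {x} \<in> IC P)"
    using xJ sym by (auto simp: toggle_def)
  show ?thesis
  proof
    assume "x \<in> rowmotion_wrt P xs I"
    then have ic: "J \<union> {x} \<in> IC P" using rowx tog by simp
    show "x \<in> ceiling_set P I" unfolding ceiling_set_def
    proof (intro CollectI conjI ballI)
      show "x \<in> up_closure P I - I" by fact
      fix z assume z: "z \<in> up_closure P I - I"
      show "\<not> z < x"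
      proof
        assume zx: "z < x"
        obtain b where bI: "b \<in> I" and bz: "b \<le> z" and zP: "z \<in> P" and zI: "z \<notin> I"
          using z by (auto simp: up_closure_def)
        have bJ: "b \<in> J" using below[of b] bI bz zx by auto
        have H: "\<forall>p\<in>J \<union> {x}. \<forall>q\<in>J \<union> {x}. \<forall>z\<in>P. p \<le> z \<and> z \<le> q \<longrightarrow> z \<in> J \<union> {x}"
          using ic by (rule IC_ball)
        have "b \<in> J \<union> {x}" "x \<in> J \<union> {x}" using bJ by auto
        then have "z \<in> J \<union> {x}" using H zP bz less_imp_le[OF zx] by blast
        then show False using below[OF zx] zI zx by auto
      qed
    qed
  next
    assume ceil: "x \<in> ceiling_set P I"
    have "J \<union> {x} \<in> IC P"
      unfolding IC_def interval_closed_def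
    proof (intro CollectI conjI ballI impI)
      show "J \<union> {x} \<subseteq> P" using IC_sub[OF JIC] xP by blast
    next
      fix p q z assume p: "p \<in> J \<union> {x}" and q: "q \<in> J \<union> {x}" and zP: "z \<in> P"
        and pzq: "p \<le> z \<and> z \<le> q"
      show "z \<in> J \<union> {x}"
      proof (cases "p \<in> J \<and> q \<in> J")
        case True then show ?thesis using IC_mem[OF JIC _ _ zP] pzq by blast
      next
        case False
        show ?thesis
        proof (cases "q = x")
          case qx: True
          show ?thesis
          proof (cases "z = x")
            case True then show ?thesis by simp
          next
            case zx0: False
            have zx: "z < x" using zx0 pzq qx by auto
            have pJ: "p \<in> J" using p zx pzq by auto
            have pI: "p \<in> I" using below[of p] pJ pzq zx by auto
            have zup: "z \<in> up_closure P I" using pI pzq zP by (auto simp: up_closure_def)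
            have "z \<in> I"
            proof (rule ccontr)
              assume "z \<notin> I"
              then show False using ceil zup zx by (auto simp: ceiling_set_def)
            qed
            then show ?thesis using below[OF zx] by simp
          qed
        next
          case qx: False
          then have qJ: "q \<in> J" using q by simp
          then have px: "p = x" using False p by auto
          have qP: "q \<in> P" using IC_sub[OF JIC] qJ by blast
          have "\<not> x < q" using above[OF qP] qJ by auto
          then have "q = x" using pzq px by auto
          then show ?thesis using qx by simp
        qed
      qed
    qed
    then show "x \<in> rowmotion_wrt P xs I" using rowx tog by simp
  qed
qed

end
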